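(* Let $L_1$ and $L_2$ be non-nilpotent finite-dimensional Lie algebras over a field $F$. Then $\Gamma_{\mathfrak{N}}(L_1\oplus L_2)$ is connected.
   Context: $\langle a,b\rangle$ denotes the Lie subalgebra generated by $a,b$, and $\mathrm{nil}(L)=\{x\in L\mid \langle h,x\rangle \text{ is nilpotent for all } h\in L\}$. For a finite-dimensional non-nilpotent Lie algebra $L$, the nilpotent graph $\Gamma_{\mathfrak{N}}(L)$ is the simple undirected graph with vertex set $L\setminus\mathrm{nil}(L)$ in which distinct vertices $x,y$ are adjacent iff $\langle x,y\rangle$ is nilpotent. $L_1\oplus L_2$ is the direct sum of Lie algebras with componentwise bracket. *)

theory Defs
  imports Main "HOL.Vector_Spaces" "HOL-Library.Product_Plus"
begin

text \<open>A Lie algebra over a field 'k, carried by the whole type 'v, with scalar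
multiplication s and bracket br.\<close>

definition lie_algebra :: "('k::field \<Rightarrow> 'v::ab_group_add \<Rightarrow> 'v) \<Rightarrow> ('v \<Rightarrow> 'v \<Rightarrow> 'v) \<Rightarrow> bool" where
  "lie_algebra s br \<longleftrightarrow> vector_space s
     \<and> (\<forall>x y z. br (x + y) z = br x z + br y z)
     \<and> (\<forall>x y z. br x (y + z) = br x y + br x z)
     \<and> (\<forall>c x y. br (s c x) y = s c (br x y))
     \<and> (\<forall>c x y. br x (s c y) = s c (br x y))
     \<and> (\<forall>x. br x x = 0)
     \<and> (\<forall>x y z. br x (br y z) + br y (br z x) + br z (br x y) = 0)"

definition fin_dim_lie_algebra :: "('k::field \<Rightarrow> 'v::ab_group_add \<Rightarrow> 'v) \<Rightarrow> ('v \<Rightarrow> 'v \<Rightarrow> 'v) \<Rightarrow> bool" where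
  "fin_dim_lie_algebra s br \<longleftrightarrow> lie_algebra s br \<and> (\<exists>B. finite B \<and> module.span s B = UNIV)"

definition lie_subalgebra :: "('k::field \<Rightarrow> 'v::ab_group_add \<Rightarrow> 'v) \<Rightarrow> ('v \<Rightarrow> 'v \<Rightarrow> 'v) \<Rightarrow> 'v set \<Rightarrow> bool" where
  "lie_subalgebra s br S \<longleftrightarrow> module.subspace s S \<and> (\<forall>x\<in>S. \<forall>y\<in>S. br x y \<in> S)"

definition gen_subalg :: "('k::field \<Rightarrow> 'v::ab_group_add \<Rightarrow> 'v) \<Rightarrow> ('v \<Rightarrow> 'v \<Rightarrow> 'v) \<Rightarrow> 'v set \<Rightarrow> 'v set" where
  "gen_subalg s br A = \<Inter>{S. lie_subalgebra s br S \<and> A \<subseteq> S}"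

primrec lcs :: "('k::field \<Rightarrow> 'v::ab_group_add \<Rightarrow> 'v) \<Rightarrow> ('v \<Rightarrow> 'v \<Rightarrow> 'v) \<Rightarrow> 'v set \<Rightarrow> nat \<Rightarrow> 'v set" where
  "lcs s br S 0 = S"
| "lcs s br S (Suc n) = module.span s {br x y | x y. x \<in> S \<and> y \<in> lcs s br S n}"

definition nilpotent_subalg :: "('k::field \<Rightarrow> 'v::ab_group_add \<Rightarrow> 'v) \<Rightarrow> ('v \<Rightarrow> 'v \<Rightarrow> 'v) \<Rightarrow> 'v set \<Rightarrow> bool" where
  "nilpotent_subalg s br S \<longleftrightarrow> (\<exists>n. lcs s br S n = {0})"

definition lie_nilpotent :: "('k::field \<Rightarrow> 'v::ab_group_add \<Rightarrow> 'v) \<Rightarrow> ('v \<Rightarrow> 'v \<Rightarrow> 'v) \<Rightarrow> bool" where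
  "lie_nilpotent s br \<longleftrightarrow> nilpotent_subalg s br UNIV"

definition nil_set :: "('k::field \<Rightarrow> 'v::ab_group_add \<Rightarrow> 'v) \<Rightarrow> ('v \<Rightarrow> 'v \<Rightarrow> 'v) \<Rightarrow> 'v set" where
  "nil_set s br = {x. \<forall>h. nilpotent_subalg s br (gen_subalg s br {h, x})}"

definition ngraph_adj :: "('k::field \<Rightarrow> 'v::ab_group_add \<Rightarrow> 'v) \<Rightarrow> ('v \<Rightarrow> 'v \<Rightarrow> 'v) \<Rightarrow> 'v \<Rightarrow> 'v \<Rightarrow> bool" where
  "ngraph_adj s br x y \<longleftrightarrow> x \<notin> nil_set s br \<and> y \<notin> nil_set s br \<and> x \<noteq> y
     \<and> nilpotent_subalg s br (gen_subalg s br {x, y})"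

definition ngraph_connected :: "('k::field \<Rightarrow> 'v::ab_group_add \<Rightarrow> 'v) \<Rightarrow> ('v \<Rightarrow> 'v \<Rightarrow> 'v) \<Rightarrow> bool" where
  "ngraph_connected s br \<longleftrightarrow>
     (UNIV - nil_set s br \<noteq> {}) \<and>
     (\<forall>x \<in> UNIV - nil_set s br. \<forall>y \<in> UNIV - nil_set s br.
        \<exists>xs. xs \<noteq> [] \<and> hd xs = x \<and> last xs = y \<and> set xs \<subseteq> UNIV - nil_set s br
           \<and> (\<forall>i. Suc i < length xs \<longrightarrow> ngraph_adj s br (xs ! i) (xs ! Suc i)))"

definition sum_scale :: "('k \<Rightarrow> 'a \<Rightarrow> 'a) \<Rightarrow> ('k \<Rightarrow> 'b \<Rightarrow> 'b) \<Rightarrow> 'k \<Rightarrow> 'a \<times> 'b \<Rightarrow> 'a \<times> 'b" where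
  "sum_scale s1 s2 c p = (s1 c (fst p), s2 c (snd p))"

definition sum_bracket :: "('a \<Rightarrow> 'a \<Rightarrow> 'a) \<Rightarrow> ('b \<Rightarrow> 'b \<Rightarrow> 'b) \<Rightarrow> 'a \<times> 'b \<Rightarrow> 'a \<times> 'b \<Rightarrow> 'a \<times> 'b" where
  "sum_bracket b1 b2 p q = (b1 (fst p) (fst q), b2 (snd p) (snd q))"

end

theory Submission
  imports Defs
begin

locale lie =
  fixes s :: "'k::field \<Rightarrow> 'v::ab_group_add \<Rightarrow> 'v" and br :: "'v \<Rightarrow> 'v \<Rightarrow> 'v"
  assumes lie: "lie_algebra s br"
begin

sublocale vector_space s using lie by (simp add: lie_algebra_def)

lemma br_add_left: "br (x + y) z = br x z + br y z" using lie by (simp add: lie_algebra_def)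
lemma br_add_right: "br x (y + z) = br x y + br x z" using lie by (simp add: lie_algebra_def)
lemma br_scale_left: "br (s c x) y = s c (br x y)" using lie by (simp add: lie_algebra_def)
lemma br_scale_right: "br x (s c y) = s c (br x y)" using lie by (simp add: lie_algebra_def)
lemma br_alt[simp]: "br x x = 0" using lie by (simp add: lie_algebra_def)
lemma jacobi: "br x (br y z) + br y (br z x) + br z (br x y) = 0" using lie by (simp add: lie_algebra_def)
lemma br_zero_left[simp]: "br 0 y = 0" using br_add_left[of 0 0 y] by simp
lemma br_zero_right[simp]: "br y 0 = 0" using br_add_right[of y 0 0] by simp
lemma br_anti: "br x y = - br y x"
proof -
  have "br x x + br y x + (br x y + br y y) = 0"
    using br_alt[of "x+y"] by (simp only: br_add_left br_add_right)
  hence "br y x + br x y = 0" by simp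
  hence "br x y + br y x = 0" by (simp add: add.commute)
  thus ?thesis by (simp add: eq_neg_iff_add_eq_0)
qed
lemma br_neg_right: "br x (- y) = - br x y"
  using br_add_right[of x y "-y"] by (simp add: eq_neg_iff_add_eq_0 add.commute)
lemma br_neg_left: "br (- x) y = - br x y"
  using br_add_left[of x "-x" y] by (simp add: eq_neg_iff_add_eq_0 add.commute)

lemma span_insert_decomp:
  assumes "subspace M" "x \<in> span (insert k M)"
  obtains m a where "m \<in> M" "x = m + s a k"
proof -
  from assms(2) obtain a where "x - s a k \<in> span M" by (auto simp: span_insert)
  hence "x - s a k \<in> M" using assms(1) by (simp only: span_eq_iff[symmetric])
  thus ?thesis using that[of "x - s a k" a] by simp
qed

lemma subalg_subspace: "lie_subalgebra s br S \<Longrightarrow> subspace S"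
  by (simp add: lie_subalgebra_def)

lemma gen_sub: "lie_subalgebra s br (gen_subalg s br A)"
proof -
  define F where "F = {S. lie_subalgebra s br S \<and> A \<subseteq> S}"
  have sub: "\<And>S. S \<in> F \<Longrightarrow> subspace S \<and> (\<forall>x\<in>S. \<forall>y\<in>S. br x y \<in> S)"
    by (simp add: lie_subalgebra_def F_def)
  have "subspace (\<Inter>F)"
  proof (rule subspaceI)
    show "0 \<in> \<Inter>F" using sub subspace_0 by blast
    show "x + y \<in> \<Inter>F" if "x \<in> \<Inter>F" "y \<in> \<Inter>F" for x y
      using that sub subspace_add by blast
    show "s c x \<in> \<Inter>F" if "x \<in> \<Inter>F" for c x
      using that sub subspace_scale by blast
  qed
  moreover have "\<forall>x\<in>\<Inter>F. \<forall>y\<in>\<Inter>F. br x y \<in> \<Inter>F" using sub by blast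
  ultimately show ?thesis by (simp add: lie_subalgebra_def gen_subalg_def F_def)
qed

lemma gen_base: "A \<subseteq> gen_subalg s br A"
  unfolding gen_subalg_def by auto

lemma gen_least: "lie_subalgebra s br S \<Longrightarrow> A \<subseteq> S \<Longrightarrow> gen_subalg s br A \<subseteq> S"
  unfolding gen_subalg_def by auto

lemma lcs_zero_mem: "0 \<in> S \<Longrightarrow> 0 \<in> lcs s br S n"
proof (cases n)
  case (Suc m)
  show ?thesis unfolding Suc lcs.simps by (rule span_zero)
qed simp

lemma lcs_stable:
  assumes "lcs s br S n \<subseteq> {0}" shows "lcs s br S (n + k) \<subseteq> {0}"
proof (induction k)
  case 0 show ?case using assms by simp
next
  case (Suc k)
  have "{br x y | x y. x \<in> S \<and> y \<in> lcs s br S (n + k)} \<subseteq> {0}"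
  proof
    fix z assume "z \<in> {br x y | x y. x \<in> S \<and> y \<in> lcs s br S (n + k)}"
    then obtain x y where "z = br x y" "y \<in> lcs s br S (n + k)" by blast
    moreover have "y = 0" using Suc.IH calculation(2) by blast
    ultimately show "z \<in> {0}" by simp
  qed
  hence "span {br x y | x y. x \<in> S \<and> y \<in> lcs s br S (n + k)} \<subseteq> {0}"
    using span_minimal subspace_single_0 by blast
  thus ?case by (simp only: add_Suc_right lcs.simps)
qed

lemma nilpotent_iff: "0 \<in> S \<Longrightarrow> nilpotent_subalg s br S \<longleftrightarrow> (\<exists>n. lcs s br S n \<subseteq> {0})"
proof
  assume "nilpotent_subalg s br S"
  then obtain n where "lcs s br S n = {0}" by (auto simp: nilpotent_subalg_def)
  thus "\<exists>n. lcs s br S n \<subseteq> {0}" by auto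
next
  assume "0 \<in> S" "\<exists>n. lcs s br S n \<subseteq> {0}"
  then obtain n where "lcs s br S n \<subseteq> {0}" "0 \<in> lcs s br S n" using lcs_zero_mem by auto
  hence "lcs s br S n = {0}" by auto
  thus "nilpotent_subalg s br S" by (auto simp: nilpotent_subalg_def)
qed

lemma gen_zero: "0 \<in> gen_subalg s br A"
  by (rule subspace_0[OF subalg_subspace[OF gen_sub]])

lemma pair_nil:
  assumes "c' \<in> span {c}" "d \<in> span {c}"
  shows "nilpotent_subalg s br (gen_subalg s br {c', d})"
proof -
  have brz: "br x y = 0" if xs: "x \<in> span {c}" "y \<in> span {c}" for x y
  proof -
    obtain a b where "x = s a c" "y = s b c" using xs unfolding span_singleton by blast
    thus ?thesis by (simp only: br_scale_left br_scale_right br_alt scale_zero_right)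
  qed
  have "lie_subalgebra s br (span {c})"
    unfolding lie_subalgebra_def by (simp add: brz span_zero)
  hence G: "gen_subalg s br {c', d} \<subseteq> span {c}" using assms gen_least[of "span {c}" "{c', d}"] by blast
  have "{br x y |x y. x \<in> gen_subalg s br {c', d} \<and> y \<in> lcs s br (gen_subalg s br {c', d}) 0} \<subseteq> {0}"
  proof
    fix z assume "z \<in> {br x y |x y. x \<in> gen_subalg s br {c', d} \<and> y \<in> lcs s br (gen_subalg s br {c', d}) 0}"
    then obtain x y where "z = br x y" "x \<in> span {c}" "y \<in> span {c}" using G by auto
    thus "z \<in> {0}" using brz by simp
  qed
  hence "span {br x y |x y. x \<in> gen_subalg s br {c', d} \<and> y \<in> lcs s br (gen_subalg s br {c', d}) 0} \<subseteq> {0}"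
    using span_minimal subspace_single_0 by blast
  hence "lcs s br (gen_subalg s br {c', d}) (Suc 0) \<subseteq> {0}" by (simp only: lcs.simps)
  hence "\<exists>n. lcs s br (gen_subalg s br {c', d}) n \<subseteq> {0}" by blast
  thus ?thesis by (simp only: nilpotent_iff[OF gen_zero])
qed

lemma pair_nil2:
  assumes "q = p \<or> q = 0 \<or> p = 0"
  shows "nilpotent_subalg s br (gen_subalg s br {p, q})"
proof -
  have "p \<in> span {p}" "q \<in> span {q}" by (auto intro: span_base)
  moreover have "0 \<in> span {p}" "0 \<in> span {q}" by (auto intro: span_zero)
  ultimately show ?thesis using assms pair_nil[of p p q] pair_nil[of p q q] by auto
qed


lemma ad_nil_of_nilset:
  assumes "nil_set s br = UNIV" shows "\<exists>n. (br x ^^ n) y = 0"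
proof -
  let ?G = "gen_subalg s br {x, y}"
  have "y \<in> nil_set s br" using assms by simp
  hence "nilpotent_subalg s br ?G" by (simp add: nil_set_def)
  then obtain n where n: "lcs s br ?G n = {0}" by (auto simp: nilpotent_subalg_def)
  have xG: "x \<in> ?G" and yG: "y \<in> ?G" using gen_base[of "{x, y}"] by auto
  have I: "(br x ^^ m) y \<in> lcs s br ?G m" for m
  proof (induction m)
    case 0 show ?case using yG by simp
  next
    case (Suc m)
    have "br x ((br x ^^ m) y) \<in> {br a b | a b. a \<in> ?G \<and> b \<in> lcs s br ?G m}"
      using xG Suc.IH by blast
    hence "br x ((br x ^^ m) y) \<in> lcs s br ?G (Suc m)" unfolding lcs.simps by (rule span_base)
    thus ?case by simp
  qed
  from I[of n] n have "(br x ^^ n) y \<in> {0}" by simp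
  thus ?thesis by blast
qed

lemma fd_exists:
  assumes "finite B" "span B = UNIV"
  shows "\<exists>Bs. finite_dimensional_vector_space s Bs"
proof -
  obtain Bs where Bs: "Bs \<subseteq> B" "independent Bs" "B \<subseteq> span Bs" by (rule maximal_independent_subset)
  have "span B \<subseteq> span Bs" using Bs(3) by (simp add: span_minimal)
  hence "span Bs = UNIV" using assms(2) by blast
  moreover have "finite Bs" using Bs(1) assms(1) finite_subset by blast
  ultimately have "finite_dimensional_vector_space s Bs"
    using Bs(2) by unfold_locales auto
  thus ?thesis by blast
qed

lemma subspace_eq_span: "subspace M \<Longrightarrow> span M = M"
  by (simp only: span_eq_iff)

lemma engel_lin:
  assumes fin: "finite B" "span B = UNIV" and nilp: "\<And>x y. \<exists>n. (br x ^^ n) y = 0"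
  shows "\<And>K V W. lie_subalgebra s br K \<Longrightarrow> subspace V \<Longrightarrow> subspace W \<Longrightarrow> W \<subseteq> V \<Longrightarrow> W \<noteq> V
    \<Longrightarrow> (\<forall>k\<in>K. \<forall>v\<in>V. br k v \<in> V) \<Longrightarrow> (\<forall>k\<in>K. \<forall>w\<in>W. br k w \<in> W)
    \<Longrightarrow> \<exists>v\<in>V. v \<notin> W \<and> (\<forall>k\<in>K. br k v \<in> W)"
proof -
  obtain Bs where "finite_dimensional_vector_space s Bs" using fd_exists[OF fin] by blast
  then interpret fd: finite_dimensional_vector_space s Bs .
  have main: "\<And>K V W. dim K = N \<Longrightarrow> lie_subalgebra s br K \<Longrightarrow> subspace V \<Longrightarrow> subspace W \<Longrightarrow> W \<subseteq> V \<Longrightarrow> W \<noteq> V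
    \<Longrightarrow> (\<forall>k\<in>K. \<forall>v\<in>V. br k v \<in> V) \<Longrightarrow> (\<forall>k\<in>K. \<forall>w\<in>W. br k w \<in> W)
    \<Longrightarrow> \<exists>v\<in>V. v \<notin> W \<and> (\<forall>k\<in>K. br k v \<in> W)" for N
  proof (induction N rule: less_induct)
    case (less N)
    fix K V W
    assume dK: "dim K = N" and K: "lie_subalgebra s br K" and V: "subspace V" and W: "subspace W"
      and WV: "W \<subseteq> V" "W \<noteq> V" and KV: "\<forall>k\<in>K. \<forall>v\<in>V. br k v \<in> V"
      and KW: "\<forall>k\<in>K. \<forall>w\<in>W. br k w \<in> W"
    have Ks: "subspace K" using K by (rule subalg_subspace)
    have Kc: "\<And>x y. x \<in> K \<Longrightarrow> y \<in> K \<Longrightarrow> br x y \<in> K" using K by (simp add: lie_subalgebra_def)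
    show "\<exists>v\<in>V. v \<notin> W \<and> (\<forall>k\<in>K. br k v \<in> W)"
    proof (cases "K \<subseteq> {0}")
      case True
      obtain v where "v \<in> V" "v \<notin> W" using WV by blast
      moreover have "\<forall>k\<in>K. br k v \<in> W" using True subspace_0[OF W] by auto
      ultimately show ?thesis by blast
    next
      case False
      then obtain k1 where k1: "k1 \<in> K" "k1 \<noteq> 0" by blast
      define P where "P M \<longleftrightarrow> lie_subalgebra s br M \<and> M \<subseteq> K \<and> M \<noteq> K" for M
      have dimlt: "dim M < dim K" if "P M" for M
      proof -
        have "M \<subseteq> K" "M \<noteq> K" "subspace M" using that by (auto simp: P_def lie_subalgebra_def)
        hence "span M \<subset> span K" using Ks by (simp add: subspace_eq_span)
        thus ?thesis by (rule fd.dim_psubset)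
      qed
      have P0: "P {0}"
        unfolding P_def lie_subalgebra_def using k1 subspace_0[OF Ks] by auto
      obtain M where PM: "P M" and Mmax: "\<forall>M'. P M' \<longrightarrow> dim M' \<le> dim M"
        using ex_has_greatest_nat[of P "{0}" dim "dim K"] P0 dimlt by blast
      have M: "lie_subalgebra s br M" "M \<subseteq> K" "M \<noteq> K" using PM by (auto simp: P_def)
      have Ms: "subspace M" using M(1) by (rule subalg_subspace)
      have Mc: "\<And>x y. x \<in> M \<Longrightarrow> y \<in> M \<Longrightarrow> br x y \<in> M" using M(1) by (simp add: lie_subalgebra_def)
      have "\<exists>v\<in>K. v \<notin> M \<and> (\<forall>k\<in>M. br k v \<in> M)"
        apply (rule less.IH[OF _ refl M(1) Ks Ms M(2) M(3)])
        using dimlt[OF PM] dK M(2) Kc Mc by auto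
      then obtain k0 where k0: "k0 \<in> K" "k0 \<notin> M" "\<And>m. m \<in> M \<Longrightarrow> br m k0 \<in> M" by blast
      define M' where "M' = span (insert k0 M)"
      have MM': "M \<subseteq> M'" unfolding M'_def using span_superset by blast
      have M'c: "br x y \<in> M'" if xy: "x \<in> M'" "y \<in> M'" for x y
      proof -
        obtain mx a where mx: "mx \<in> M" "x = mx + s a k0" using span_insert_decomp[OF Ms xy(1)[unfolded M'_def]] by blast
        obtain my b where my: "my \<in> M" "y = my + s b k0" using span_insert_decomp[OF Ms xy(2)[unfolded M'_def]] by blast
        have e: "br x y = br mx my + s a (br k0 my) + s b (br mx k0 + s a (br k0 k0))"
          unfolding mx(2) my(2) by (simp only: br_add_left br_add_right br_scale_left br_scale_right)
        have "br k0 my = - br my k0" by (rule br_anti)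
        hence "br k0 my \<in> M" using k0(3)[OF my(1)] subspace_neg[OF Ms] by simp
        hence "br x y \<in> M" unfolding e
          using Mc[OF mx(1) my(1)] k0(3)[OF mx(1)] Ms
          by (simp add: subspace_add subspace_scale subspace_0)
        thus ?thesis using MM' by blast
      qed
      have M'K: "M' \<subseteq> K" unfolding M'_def using k0(1) M(2) Ks by (simp add: span_minimal)
      have M'eq: "M' = K"
      proof (rule ccontr)
        assume "M' \<noteq> K"
        hence "P M'" using M'K M'c unfolding P_def lie_subalgebra_def M'_def by auto
        hence "dim M' \<le> dim M" using Mmax by blast
        moreover have "span M \<subset> span M'"
        proof -
          have "k0 \<in> M'" unfolding M'_def by (simp add: span_base)
          hence "M \<subset> M'" using MM' k0(2) by blast
          thus ?thesis by (simp add: subspace_eq_span[OF Ms] M'_def span_span)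
        qed
        hence "dim M < dim M'" by (rule fd.dim_psubset)
        ultimately show False by simp
      qed
      have "\<exists>v\<in>V. v \<notin> W \<and> (\<forall>k\<in>M. br k v \<in> W)"
        apply (rule less.IH[OF _ refl M(1) V W WV(1) WV(2)])
        using dimlt[OF PM] dK M(2) KV KW by auto
      then obtain u where u: "u \<in> V" "u \<notin> W" "\<forall>m\<in>M. br m u \<in> W" by blast
      define U where "U = {v \<in> V. \<forall>m\<in>M. br m v \<in> W}"
      have Uinv: "br k0 v \<in> U" if "v \<in> U" for v
      proof -
        have vV: "v \<in> V" and vM: "\<And>m. m \<in> M \<Longrightarrow> br m v \<in> W" using that by (auto simp: U_def)
        have "br k0 v \<in> V" using KV k0(1) vV by blast
        moreover have "br m (br k0 v) \<in> W" if m: "m \<in> M" for m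
        proof -
          have J: "br m (br k0 v) + br k0 (br v m) + br v (br m k0) = 0" by (rule jacobi)
          have "br k0 (br v m) = - br k0 (br m v)" by (simp add: br_anti[of v m] br_neg_right)
          moreover have "br v (br m k0) = - br (br m k0) v" by (rule br_anti)
          ultimately have "br m (br k0 v) + - br k0 (br m v) + - br (br m k0) v = 0" using J by simp
          hence eq: "br m (br k0 v) = br k0 (br m v) + br (br m k0) v"
            by (simp add: algebra_simps)
          have "br k0 (br m v) \<in> W" using KW k0(1) vM[OF m] by blast
          moreover have "br (br m k0) v \<in> W" using vM k0(3)[OF m] by blast
          ultimately show ?thesis unfolding eq using W by (simp add: subspace_add)
        qed
        ultimately show ?thesis by (simp add: U_def)
      qed
      have uU: "u \<in> U" using u by (simp add: U_def)
      have iter: "(br k0 ^^ i) u \<in> U" for i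
        by (induction i) (simp_all add: uU Uinv)
      obtain n where n: "(br k0 ^^ n) u = 0" using nilp by blast
      define Q where "Q i \<longleftrightarrow> (br k0 ^^ i) u \<in> W" for i
      have Qn: "Q n" using n subspace_0[OF W] by (simp add: Q_def)
      define n0 where "n0 = (LEAST i. Q i)"
      have Qn0: "Q n0" unfolding n0_def using Qn by (rule LeastI)
      have n0nz: "n0 \<noteq> 0"
      proof
        assume "n0 = 0" thus False using Qn0 u(2) by (simp add: Q_def)
      qed
      then obtain j where j: "n0 = Suc j" by (cases n0) auto
      have nQj: "\<not> Q j" using not_less_Least[of j Q] j unfolding n0_def by simp
      define v where "v = (br k0 ^^ j) u"
      have vU: "v \<in> U" unfolding v_def by (rule iter)
      have vW: "v \<notin> W" using nQj by (simp add: Q_def v_def)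
      have k0v: "br k0 v \<in> W" using Qn0 j by (simp add: Q_def v_def)
      have "\<forall>k\<in>K. br k v \<in> W"
      proof
        fix k assume "k \<in> K"
        hence "k \<in> span (insert k0 M)" using M'eq M'_def by simp
        then obtain m a where m: "m \<in> M" "k = m + s a k0" using span_insert_decomp[OF Ms] by blast
        have "br k v = br m v + s a (br k0 v)" unfolding m(2) by (simp only: br_add_left br_scale_left)
        moreover have "br m v \<in> W" using vU m(1) by (simp add: U_def)
        ultimately show "br k v \<in> W" using k0v W by (simp add: subspace_add subspace_scale)
      qed
      moreover have "v \<in> V" using vU by (simp add: U_def)
      ultimately show ?thesis using vW by blast
    qed
  qed
  fix K V W
  assume "lie_subalgebra s br K" "subspace V" "subspace W" "W \<subseteq> V" "W \<noteq> V"
    "\<forall>k\<in>K. \<forall>v\<in>V. br k v \<in> V" "\<forall>k\<in>K. \<forall>w\<in>W. br k w \<in> W"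
  thus "\<exists>v\<in>V. v \<notin> W \<and> (\<forall>k\<in>K. br k v \<in> W)" using main[OF refl] by blast
qed


lemma engel:
  assumes fin: "finite B" "span B = UNIV" and nilp: "\<And>x y. \<exists>n. (br x ^^ n) y = 0"
  shows "lie_nilpotent s br"
proof -
  obtain Bs where "finite_dimensional_vector_space s Bs" using fd_exists[OF fin] by blast
  then interpret fd: finite_dimensional_vector_space s Bs .
  define T where "T Y = span {br x y | x y. x \<in> UNIV \<and> y \<in> Y}" for Y
  have lcsT: "lcs s br UNIV n = (T ^^ n) UNIV" for n
    by (induction n) (simp_all add: T_def)
  have Tmono: "T Y \<subseteq> T Z" if "Y \<subseteq> Z" for Y Z
  proof -
    have "{br x y | x y. x \<in> UNIV \<and> y \<in> Y} \<subseteq> {br x y | x y. x \<in> UNIV \<and> y \<in> Z}"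
      using that by blast
    thus ?thesis unfolding T_def by (rule span_mono)
  qed
  have Tnmono: "(T ^^ n) Y \<subseteq> (T ^^ n) Z" if "Y \<subseteq> Z" for n Y Z
    by (induction n) (simp_all add: that Tmono)
  have main: "\<And>W. fd.dimension - dim W = N \<Longrightarrow> subspace W \<Longrightarrow> (\<forall>k. \<forall>v\<in>W. br k v \<in> W)
     \<Longrightarrow> (\<exists>n. (T ^^ n) W \<subseteq> {0}) \<Longrightarrow> (\<exists>n. (T ^^ n) UNIV \<subseteq> {0})" for N
  proof (induction N rule: less_induct)
    case (less N)
    fix W assume dW: "fd.dimension - dim W = N" and W: "subspace W"
      and Wi: "\<forall>k. \<forall>v\<in>W. br k v \<in> W" and Wn: "\<exists>n. (T ^^ n) W \<subseteq> {0}"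
    show "\<exists>n. (T ^^ n) UNIV \<subseteq> {0}"
    proof (cases "W = UNIV")
      case True thus ?thesis using Wn by simp
    next
      case False
      have KU: "lie_subalgebra s br UNIV" by (simp add: lie_subalgebra_def)
      obtain v where v: "v \<notin> W" "\<forall>k. br k v \<in> W"
        using engel_lin[OF fin nilp KU subspace_UNIV W _ False] Wi by auto
      define W' where "W' = span (insert v W)"
      have W's: "subspace W'" unfolding W'_def by simp
      have WW': "W \<subseteq> W'" unfolding W'_def using span_superset by blast
      have TW': "T W' \<subseteq> W"
        unfolding T_def
      proof (rule span_minimal[OF _ W])
        show "{br x y | x y. x \<in> UNIV \<and> y \<in> W'} \<subseteq> W"
        proof
          fix z assume "z \<in> {br x y | x y. x \<in> UNIV \<and> y \<in> W'}"
          then obtain x y where z: "z = br x y" "y \<in> W'" by blast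
          then obtain w a where w: "w \<in> W" "y = w + s a v"
            using span_insert_decomp[OF W z(2)[unfolded W'_def]] by blast
          have "br x y = br x w + s a (br x v)" unfolding w(2) by (simp only: br_add_right br_scale_right)
          moreover have "br x w \<in> W" using Wi w(1) by blast
          ultimately show "z \<in> W" using z(1) v(2) W by (simp add: subspace_add subspace_scale)
        qed
      qed
      have W'i: "\<forall>k. \<forall>y\<in>W'. br k y \<in> W'"
      proof (intro allI ballI)
        fix k y assume "y \<in> W'"
        hence "br k y \<in> T W'" unfolding T_def by (intro span_base) blast
        thus "br k y \<in> W'" using TW' WW' by blast
      qed
      obtain n where n: "(T ^^ n) W \<subseteq> {0}" using Wn by blast
      have "(T ^^ Suc n) W' = (T ^^ n) (T W')" by (simp only: funpow_Suc_right comp_def)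
      also have "\<dots> \<subseteq> (T ^^ n) W" using TW' by (rule Tnmono)
      finally have W'n: "\<exists>n. (T ^^ n) W' \<subseteq> {0}" using n by blast
      have "span W \<subset> span W'"
      proof -
        have "v \<in> W'" unfolding W'_def by (simp add: span_base)
        hence "W \<subset> W'" using WW' v(1) by blast
        thus ?thesis by (simp add: subspace_eq_span[OF W] W'_def span_span)
      qed
      hence "dim W < dim W'" by (rule fd.dim_psubset)
      moreover have "dim W' \<le> fd.dimension" by (rule fd.dim_subset_UNIV)
      ultimately have "fd.dimension - dim W' < N" using dW by linarith
      from less.IH[OF this refl W's W'i W'n] show ?thesis .
    qed
  qed
  have "\<exists>n. (T ^^ n) UNIV \<subseteq> {0}"
  proof (rule main[OF refl subspace_single_0])
    show "\<forall>k. \<forall>v\<in>{0}. br k v \<in> {0}" by simp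
    have "(T ^^ 0) {0} \<subseteq> {0}" by simp
    thus "\<exists>n. (T ^^ n) {0} \<subseteq> {0}" by blast
  qed
  hence "\<exists>n. lcs s br UNIV n \<subseteq> {0}" by (simp add: lcsT)
  thus ?thesis unfolding lie_nilpotent_def by (simp only: nilpotent_iff[OF UNIV_I])
qed

lemma exists_non_nil:
  assumes "fin_dim_lie_algebra s br" "\<not> lie_nilpotent s br"
  shows "\<exists>a. a \<notin> nil_set s br"
proof (rule ccontr)
  assume "\<not> (\<exists>a. a \<notin> nil_set s br)"
  hence "nil_set s br = UNIV" by blast
  hence "\<And>x y. \<exists>n. (br x ^^ n) y = 0" by (rule ad_nil_of_nilset)
  moreover obtain B where "finite B" "span B = UNIV" using assms(1) by (auto simp: fin_dim_lie_algebra_def)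
  ultimately have "lie_nilpotent s br" using engel by blast
  thus False using assms(2) by simp
qed

end

lemma sum_vs:
  assumes "vector_space s1" "vector_space s2"
  shows "vector_space (sum_scale s1 s2)"
  using assms unfolding vector_space_def sum_scale_def by (simp add: prod_eq_iff)

lemma sum_lie:
  assumes "lie_algebra s1 b1" "lie_algebra s2 b2"
  shows "lie_algebra (sum_scale s1 s2) (sum_bracket b1 b2)"
proof -
  have "vector_space (sum_scale s1 s2)" using assms sum_vs by (auto simp: lie_algebra_def)
  thus ?thesis using assms unfolding lie_algebra_def sum_scale_def sum_bracket_def
    by (simp add: prod_eq_iff)
qed

lemma proj_nil:
  fixes s :: "'k::field \<Rightarrow> 'v::ab_group_add \<Rightarrow> 'v" and s' :: "'k \<Rightarrow> 'w::ab_group_add \<Rightarrow> 'w"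
  assumes L: "lie s br" and L': "lie s' br'" and hom: "module_hom s s' f"
    and fb: "\<And>x y. f (br x y) = br' (f x) (f y)"
    and nil: "nilpotent_subalg s br (gen_subalg s br {u, v})"
  shows "nilpotent_subalg s' br' (gen_subalg s' br' {f u, f v})"
proof -
  interpret A: lie s br by (rule L)
  interpret B: lie s' br' by (rule L')
  interpret h: module_hom s s' f by (rule hom)
  define G where "G = gen_subalg s br {u, v}"
  define G' where "G' = gen_subalg s' br' {f u, f v}"
  have "B.subspace (f ` G)" unfolding G_def by (rule h.subspace_image[OF A.subalg_subspace[OF A.gen_sub]])
  moreover have "\<forall>x\<in>f ` G. \<forall>y\<in>f ` G. br' x y \<in> f ` G"
  proof (intro ballI)
    fix x y assume "x \<in> f ` G" "y \<in> f ` G"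
    then obtain x0 y0 where "x0 \<in> G" "y0 \<in> G" "x = f x0" "y = f y0" by blast
    moreover have "br x0 y0 \<in> G" using calculation A.gen_sub unfolding G_def lie_subalgebra_def by blast
    ultimately have "br' x y = f (br x0 y0)" "br x0 y0 \<in> G" using fb by simp_all
    thus "br' x y \<in> f ` G" by blast
  qed
  ultimately have "lie_subalgebra s' br' (f ` G)" by (simp add: lie_subalgebra_def)
  moreover have "{f u, f v} \<subseteq> f ` G" using A.gen_base[of "{u, v}"] unfolding G_def by blast
  ultimately have G'G: "G' \<subseteq> f ` G" unfolding G'_def by (rule B.gen_least)
  have I: "lcs s' br' G' n \<subseteq> f ` lcs s br G n" for n
  proof (induction n)
    case 0 show ?case using G'G by simp
  next
    case (Suc n)
    have "{br' x y | x y. x \<in> G' \<and> y \<in> lcs s' br' G' n} \<subseteq> f ` {br x y | x y. x \<in> G \<and> y \<in> lcs s br G n}"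
    proof
      fix z assume "z \<in> {br' x y | x y. x \<in> G' \<and> y \<in> lcs s' br' G' n}"
      then obtain x y where "z = br' x y" "x \<in> G'" "y \<in> lcs s' br' G' n" by blast
      moreover then obtain x0 y0 where "x0 \<in> G" "y0 \<in> lcs s br G n" "x = f x0" "y = f y0"
        using G'G Suc.IH by blast
      ultimately have "z = f (br x0 y0)" "br x0 y0 \<in> {br x y | x y. x \<in> G \<and> y \<in> lcs s br G n}"
        using fb by auto
      thus "z \<in> f ` {br x y | x y. x \<in> G \<and> y \<in> lcs s br G n}" by blast
    qed
    hence "B.span {br' x y | x y. x \<in> G' \<and> y \<in> lcs s' br' G' n}
        \<subseteq> B.span (f ` {br x y | x y. x \<in> G \<and> y \<in> lcs s br G n})" by (rule B.span_mono)
    also have "\<dots> = f ` A.span {br x y | x y. x \<in> G \<and> y \<in> lcs s br G n}" by (rule h.span_image)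
    finally show ?case by simp
  qed
  obtain n where "lcs s br G n = {0}" using nil unfolding G_def nilpotent_subalg_def by blast
  with I[of n] have "lcs s' br' G' n \<subseteq> {0}" by simp
  hence "\<exists>n. lcs s' br' G' n \<subseteq> {0}" by blast
  thus ?thesis unfolding G'_def by (simp only: B.nilpotent_iff[OF B.gen_zero])
qed

lemma prod_nil:
  fixes s1 :: "'k::field \<Rightarrow> 'a::ab_group_add \<Rightarrow> 'a" and s2 :: "'k \<Rightarrow> 'b::ab_group_add \<Rightarrow> 'b"
  assumes L1: "lie s1 b1" and L2: "lie s2 b2"
    and n1: "nilpotent_subalg s1 b1 (gen_subalg s1 b1 {u1, v1})"
    and n2: "nilpotent_subalg s2 b2 (gen_subalg s2 b2 {u2, v2})"
  shows "nilpotent_subalg (sum_scale s1 s2) (sum_bracket b1 b2) (gen_subalg (sum_scale s1 s2) (sum_bracket b1 b2) {(u1, u2), (v1, v2)})"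
proof -
  interpret P1: lie s1 b1 by (rule L1)
  interpret P2: lie s2 b2 by (rule L2)
  interpret S: lie "sum_scale s1 s2" "sum_bracket b1 b2"
    using sum_lie L1 L2 unfolding lie_def by blast
  have prodsub: "S.subspace (X \<times> Y)" if "P1.subspace X" "P2.subspace Y" for X Y
  proof (rule S.subspaceI)
    show "0 \<in> X \<times> Y" using that P1.subspace_0 P2.subspace_0 by (simp add: zero_prod_def)
    show "x + y \<in> X \<times> Y" if "x \<in> X \<times> Y" "y \<in> X \<times> Y" for x y
      using that \<open>P1.subspace X\<close> \<open>P2.subspace Y\<close> P1.subspace_add P2.subspace_add
      by (auto simp: mem_Times_iff)
    show "sum_scale s1 s2 c x \<in> X \<times> Y" if "x \<in> X \<times> Y" for c x
      using that \<open>P1.subspace X\<close> \<open>P2.subspace Y\<close> P1.subspace_scale P2.subspace_scale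
      by (auto simp: mem_Times_iff sum_scale_def)
  qed
  define G1 where "G1 = gen_subalg s1 b1 {u1, v1}"
  define G2 where "G2 = gen_subalg s2 b2 {u2, v2}"
  define G where "G = gen_subalg (sum_scale s1 s2) (sum_bracket b1 b2) {(u1, u2), (v1, v2)}"
  have "lie_subalgebra (sum_scale s1 s2) (sum_bracket b1 b2) (G1 \<times> G2)"
  proof -
    have "S.subspace (G1 \<times> G2)" unfolding G1_def G2_def
      by (rule prodsub[OF P1.subalg_subspace[OF P1.gen_sub] P2.subalg_subspace[OF P2.gen_sub]])
    moreover have "\<forall>x\<in>G1 \<times> G2. \<forall>y\<in>G1 \<times> G2. sum_bracket b1 b2 x y \<in> G1 \<times> G2"
      using P1.gen_sub[of "{u1, v1}"] P2.gen_sub[of "{u2, v2}"]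
      unfolding G1_def G2_def lie_subalgebra_def sum_bracket_def by (auto simp: mem_Times_iff)
    ultimately show ?thesis by (simp add: lie_subalgebra_def)
  qed
  moreover have "{(u1, u2), (v1, v2)} \<subseteq> G1 \<times> G2"
    using P1.gen_base[of "{u1, v1}"] P2.gen_base[of "{u2, v2}"] unfolding G1_def G2_def by auto
  ultimately have GG: "G \<subseteq> G1 \<times> G2" unfolding G_def by (rule S.gen_least)
  have I: "lcs (sum_scale s1 s2) (sum_bracket b1 b2) G n \<subseteq> lcs s1 b1 G1 n \<times> lcs s2 b2 G2 n" for n
  proof (induction n)
    case 0 show ?case using GG by simp
  next
    case (Suc n)
    have "S.span {sum_bracket b1 b2 x y | x y. x \<in> G \<and> y \<in> lcs (sum_scale s1 s2) (sum_bracket b1 b2) G n}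
      \<subseteq> lcs s1 b1 G1 (Suc n) \<times> lcs s2 b2 G2 (Suc n)"
    proof (rule S.span_minimal)
      show "S.subspace (lcs s1 b1 G1 (Suc n) \<times> lcs s2 b2 G2 (Suc n))"
        by (rule prodsub) simp_all
      show "{sum_bracket b1 b2 x y | x y. x \<in> G \<and> y \<in> lcs (sum_scale s1 s2) (sum_bracket b1 b2) G n}
        \<subseteq> lcs s1 b1 G1 (Suc n) \<times> lcs s2 b2 G2 (Suc n)"
      proof
        fix z assume "z \<in> {sum_bracket b1 b2 x y | x y. x \<in> G \<and> y \<in> lcs (sum_scale s1 s2) (sum_bracket b1 b2) G n}"
        then obtain x y where z: "z = sum_bracket b1 b2 x y" "x \<in> G" "y \<in> lcs (sum_scale s1 s2) (sum_bracket b1 b2) G n"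
          by blast
        have x: "fst x \<in> G1" "snd x \<in> G2" using z(2) GG by (auto simp: mem_Times_iff)
        have y: "fst y \<in> lcs s1 b1 G1 n" "snd y \<in> lcs s2 b2 G2 n" using z(3) Suc.IH by (auto simp: mem_Times_iff)
        have "b1 (fst x) (fst y) \<in> lcs s1 b1 G1 (Suc n)"
          unfolding lcs.simps by (rule P1.span_base) (use x y in blast)
        moreover have "b2 (snd x) (snd y) \<in> lcs s2 b2 G2 (Suc n)"
          unfolding lcs.simps by (rule P2.span_base) (use x y in blast)
        ultimately show "z \<in> lcs s1 b1 G1 (Suc n) \<times> lcs s2 b2 G2 (Suc n)"
          unfolding z(1) sum_bracket_def by simp
      qed
    qed
    thus ?case by simp
  qed
  obtain k1 where k1: "lcs s1 b1 G1 k1 \<subseteq> {0}" using n1 unfolding G1_def nilpotent_subalg_def by blast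
  obtain k2 where k2: "lcs s2 b2 G2 k2 \<subseteq> {0}" using n2 unfolding G2_def nilpotent_subalg_def by blast
  have "lcs s1 b1 G1 (k1 + k2) \<subseteq> {0}" using k1 by (rule P1.lcs_stable)
  moreover have "lcs s2 b2 G2 (k2 + k1) \<subseteq> {0}" using k2 by (rule P2.lcs_stable)
  ultimately have "lcs (sum_scale s1 s2) (sum_bracket b1 b2) G (k1 + k2) \<subseteq> {0}"
    using I[of "k1 + k2"] by (auto simp: add.commute zero_prod_def)
  hence "\<exists>n. lcs (sum_scale s1 s2) (sum_bracket b1 b2) G n \<subseteq> {0}" by blast
  thus ?thesis unfolding G_def by (simp only: S.nilpotent_iff[OF S.gen_zero])
qed


lemma walk_from_rtranclp:
  assumes "E\<^sup>*\<^sup>* x y" "x \<notin> N"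
    and "\<And>p q. E p q \<Longrightarrow> p \<notin> N \<and> q \<notin> N \<and> (p \<noteq> q \<longrightarrow> A p q)"
  shows "\<exists>xs. xs \<noteq> [] \<and> hd xs = x \<and> last xs = y \<and> set xs \<subseteq> UNIV - N
           \<and> (\<forall>i. Suc i < length xs \<longrightarrow> A (xs ! i) (xs ! Suc i))"
  using assms(1,2)
proof (induction rule: converse_rtranclp_induct)
  case base
  show ?case by (rule exI[of _ "[y]"]) (use base in auto)
next
  case (step x z)
  have ez: "x \<notin> N" "z \<notin> N" "x \<noteq> z \<longrightarrow> A x z" using assms(3)[OF step(1)] by auto
  then obtain zs where zs: "zs \<noteq> []" "hd zs = z" "last zs = y" "set zs \<subseteq> UNIV - N"
    "\<forall>i. Suc i < length zs \<longrightarrow> A (zs ! i) (zs ! Suc i)" using step.IH by blast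
  show ?case
  proof (cases "x = z")
    case True thus ?thesis using zs by blast
  next
    case False
    hence Axz: "A x z" using ez by blast
    have "\<forall>i. Suc i < length (x # zs) \<longrightarrow> A ((x # zs) ! i) ((x # zs) ! Suc i)"
    proof (intro allI impI)
      fix i assume i: "Suc i < length (x # zs)"
      show "A ((x # zs) ! i) ((x # zs) ! Suc i)"
      proof (cases i)
        case 0 thus ?thesis using Axz zs(1,2) by (simp add: hd_conv_nth)
      next
        case (Suc j) thus ?thesis using zs(5) i by simp
      qed
    qed
    thus ?thesis using zs ez by (intro exI[of _ "x # zs"]) auto
  qed
qed

lemma rtranclp_sym:
  assumes "\<And>p q. E p q \<Longrightarrow> E q p" "E\<^sup>*\<^sup>* x y" shows "E\<^sup>*\<^sup>* y x"
  using assms(2)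
proof (induction rule: rtranclp_induct)
  case (step z w)
  thus ?case using assms(1) by (meson converse_rtranclp_into_rtranclp)
qed simp

theorem proposition5p3:
  fixes s1 :: "'k::field \<Rightarrow> 'a::ab_group_add \<Rightarrow> 'a" and b1 :: "'a \<Rightarrow> 'a \<Rightarrow> 'a"
    and s2 :: "'k \<Rightarrow> 'b::ab_group_add \<Rightarrow> 'b" and b2 :: "'b \<Rightarrow> 'b \<Rightarrow> 'b"
  assumes "fin_dim_lie_algebra s1 b1" and "fin_dim_lie_algebra s2 b2"
    and "\<not> lie_nilpotent s1 b1" and "\<not> lie_nilpotent s2 b2"
  shows "ngraph_connected (sum_scale s1 s2) (sum_bracket b1 b2)"
proof -
  have la1: "lie_algebra s1 b1" and la2: "lie_algebra s2 b2"
    using assms(1,2) by (simp_all add: fin_dim_lie_algebra_def)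
  have L1: "lie s1 b1" and L2: "lie s2 b2" using la1 la2 by (simp_all add: lie_def)
  have LS: "lie (sum_scale s1 s2) (sum_bracket b1 b2)" using sum_lie[OF la1 la2] by (simp add: lie_def)
  interpret P1: lie s1 b1 by (rule L1)
  interpret P2: lie s2 b2 by (rule L2)
  have vs1: "vector_space s1" and vs2: "vector_space s2" and vsS: "vector_space (sum_scale s1 s2)"
    using la1 la2 sum_vs by (auto simp: lie_algebra_def)
  obtain a where a: "a \<notin> nil_set s1 b1" using P1.exists_non_nil assms(1,3) by blast
  obtain b where b: "b \<notin> nil_set s2 b2" using P2.exists_non_nil assms(2,4) by blast
  define N where "N = nil_set (sum_scale s1 s2) (sum_bracket b1 b2)"
  have hom1: "module_hom (sum_scale s1 s2) s1 fst"
    using vsS vs1 unfolding module_hom_def module_hom_axioms_def module_iff_vector_space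
    by (simp add: sum_scale_def)
  have hom2: "module_hom (sum_scale s1 s2) s2 snd"
    using vsS vs2 unfolding module_hom_def module_hom_axioms_def module_iff_vector_space
    by (simp add: sum_scale_def)
  have V1: "(x1, z) \<notin> N" if x1n: "x1 \<notin> nil_set s1 b1" for x1 z
  proof
    assume "(x1, z) \<in> N"
    obtain h1 where h1: "\<not> nilpotent_subalg s1 b1 (gen_subalg s1 b1 {h1, x1})"
      using x1n by (auto simp: nil_set_def)
    have "nilpotent_subalg (sum_scale s1 s2) (sum_bracket b1 b2) (gen_subalg (sum_scale s1 s2) (sum_bracket b1 b2) {(h1, 0), (x1, z)})"
      using \<open>(x1, z) \<in> N\<close> by (simp add: N_def nil_set_def)
    from proj_nil[OF LS L1 hom1 _ this] have "nilpotent_subalg s1 b1 (gen_subalg s1 b1 {h1, x1})"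
      by (simp add: sum_bracket_def)
    thus False using h1 by simp
  qed
  have V2: "(z, x2) \<notin> N" if x2n: "x2 \<notin> nil_set s2 b2" for x2 z
  proof
    assume "(z, x2) \<in> N"
    obtain h2 where h2: "\<not> nilpotent_subalg s2 b2 (gen_subalg s2 b2 {h2, x2})"
      using x2n by (auto simp: nil_set_def)
    have "nilpotent_subalg (sum_scale s1 s2) (sum_bracket b1 b2) (gen_subalg (sum_scale s1 s2) (sum_bracket b1 b2) {(0, h2), (z, x2)})"
      using \<open>(z, x2) \<in> N\<close> by (simp add: N_def nil_set_def)
    from proj_nil[OF LS L2 hom2 _ this] have "nilpotent_subalg s2 b2 (gen_subalg s2 b2 {h2, x2})"
      by (simp add: sum_bracket_def)
    thus False using h2 by simp
  qed
  have V3: "fst x \<notin> nil_set s1 b1 \<or> snd x \<notin> nil_set s2 b2" if "x \<notin> N" for x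
  proof (rule ccontr)
    assume "\<not> (fst x \<notin> nil_set s1 b1 \<or> snd x \<notin> nil_set s2 b2)"
    hence n1: "\<And>h. nilpotent_subalg s1 b1 (gen_subalg s1 b1 {h, fst x})"
      and n2: "\<And>h. nilpotent_subalg s2 b2 (gen_subalg s2 b2 {h, snd x})" by (auto simp: nil_set_def)
    have "nilpotent_subalg (sum_scale s1 s2) (sum_bracket b1 b2) (gen_subalg (sum_scale s1 s2) (sum_bracket b1 b2) {h, x})" for h
      using prod_nil[OF L1 L2 n1[of "fst h"] n2[of "snd h"]] by simp
    hence "x \<in> N" by (simp add: N_def nil_set_def)
    thus False using that by blast
  qed
  have pairn: "nilpotent_subalg (sum_scale s1 s2) (sum_bracket b1 b2) (gen_subalg (sum_scale s1 s2) (sum_bracket b1 b2) {(p1, p2), (q1, q2)})"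
    if "q1 = p1 \<or> q1 = 0 \<or> p1 = 0" "q2 = p2 \<or> q2 = 0 \<or> p2 = 0" for p1 p2 q1 q2
    by (rule prod_nil[OF L1 L2 P1.pair_nil2[OF that(1)] P2.pair_nil2[OF that(2)]])
  define E where "E p q \<longleftrightarrow> p \<notin> N \<and> q \<notin> N \<and> nilpotent_subalg (sum_scale s1 s2) (sum_bracket b1 b2) (gen_subalg (sum_scale s1 s2) (sum_bracket b1 b2) {p, q})" for p q
  have Esym: "E q p" if "E p q" for p q using that by (simp add: E_def insert_commute)
  define H where "H = ((0::'a), b)"
  have toH: "E\<^sup>*\<^sup>* x H" if "x \<notin> N" for x
  proof -
    obtain x1 x2 where x: "x = (x1, x2)" by (cases x)
    show ?thesis
    proof (cases "x1 \<notin> nil_set s1 b1")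
      case True
      have "E x (x1, 0)" unfolding E_def x using that x V1[OF True] pairn by simp
      moreover have "E (x1, 0) H" unfolding E_def H_def using V1[OF True] V2[OF b] pairn by simp
      ultimately show ?thesis by simp
    next
      case False
      hence x2n: "x2 \<notin> nil_set s2 b2" using V3[OF that] x by simp
      have "E x (0, x2)" unfolding E_def x using that x V2[OF x2n] pairn by simp
      moreover have "E (0, x2) (a, 0)" unfolding E_def using V2[OF x2n] V1[OF a] pairn by simp
      moreover have "E (a, 0) H" unfolding E_def H_def using V1[OF a] V2[OF b] pairn by simp
      ultimately show ?thesis by (meson converse_rtranclp_into_rtranclp r_into_rtranclp)
    qed
  qed
  have nonempty: "UNIV - N \<noteq> {}" using V1[OF a] by blast
  have conn: "\<exists>xs. xs \<noteq> [] \<and> hd xs = x \<and> last xs = y \<and> set xs \<subseteq> UNIV - N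
           \<and> (\<forall>i. Suc i < length xs \<longrightarrow> ngraph_adj (sum_scale s1 s2) (sum_bracket b1 b2) (xs ! i) (xs ! Suc i))"
    if "x \<in> UNIV - N" "y \<in> UNIV - N" for x y
  proof -
    have "E\<^sup>*\<^sup>* x H" using toH that(1) by blast
    moreover have "E\<^sup>*\<^sup>* H y" using rtranclp_sym[of E, OF Esym toH] that(2) by blast
    ultimately have "E\<^sup>*\<^sup>* x y" by simp
    moreover have "\<And>p q. E p q \<Longrightarrow> p \<notin> N \<and> q \<notin> N \<and> (p \<noteq> q \<longrightarrow> ngraph_adj (sum_scale s1 s2) (sum_bracket b1 b2) p q)"
      by (simp add: E_def ngraph_adj_def N_def)
    ultimately show ?thesis using walk_from_rtranclp[of E x y N] that(1) by blast
  qed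
  show ?thesis unfolding ngraph_connected_def N_def[symmetric] using nonempty conn by blast
qed

end
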